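(* Let $X$ be a Banach space and let $\Lambda\subset B_{X^*}$ be weak$^*$ compact with $\overline{\mathrm{co}}^{w^*}\Lambda=B_{X^*}$. If the dual norm is Fréchet differentiable at every $x^*\in\Lambda\cap S_{X^*}$, then $X^*$ is Fréchet smooth.
   Context: $B_{X^*}$ and $S_{X^*}$ are the closed unit ball and unit sphere of $X^*$; $\overline{\mathrm{co}}^{w^*}$ denotes the weak$^*$ closed convex hull. $X^*$ is Fréchet smooth if the dual norm is Fréchet differentiable at every nonzero point of $X^*$. *)

theory Defs
  imports "HOL-Analysis.Analysis"
begin

(* The dual space X* of a real Banach space 'a is modelled by the type of bounded
   linear functionals 'a =>L real with the operator norm. *)

definition weak_star_topology :: "('a::real_normed_vector \<Rightarrow>\<^sub>L real) topology" where
  "weak_star_topology =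
     pullback_topology UNIV blinfun_apply (product_topology (\<lambda>_. euclideanreal) UNIV)"

definition weak_star_closed_convex_hull ::
  "('a::real_normed_vector \<Rightarrow>\<^sub>L real) set \<Rightarrow> ('a \<Rightarrow>\<^sub>L real) set" where
  "weak_star_closed_convex_hull S =
     \<Inter>{C. convex C \<and> closedin weak_star_topology C \<and> S \<subseteq> C}"

end

theory Submission
  imports Defs
begin

lemma H0: "norm x \<le> 1 \<Longrightarrow> blinfun_apply F x \<le> norm F"
proof -
  assume "norm x \<le> 1"
  have "blinfun_apply F x \<le> norm (blinfun_apply F x)" by simp
  also have "\<dots> \<le> norm F * norm x" by (rule norm_blinfun)
  also have "\<dots> \<le> norm F" using \<open>norm x \<le> 1\<close> by (simp add: mult_left_le)
  finally show ?thesis .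
qed

lemma H1:
  fixes F :: "'a::real_normed_vector \<Rightarrow>\<^sub>L real"
  assumes "\<And>x. norm x \<le> 1 \<Longrightarrow> blinfun_apply F x \<le> B"
  shows "norm F \<le> B"
proof (rule norm_blinfun_bound)
  show B0: "0 \<le> B" using assms[of 0] by (simp add: blinfun.zero_right)
  fix x :: 'a
  show "norm (blinfun_apply F x) \<le> B * norm x"
  proof (cases "x = 0")
    case True then show ?thesis by (simp add: blinfun.zero_right)
  next
    case False
    define u where "u = (1 / norm x) *\<^sub>R x"
    have nu: "norm u = 1" using False by (simp add: u_def)
    have xu: "x = norm x *\<^sub>R u" using False by (simp add: u_def)
    have a: "blinfun_apply F u \<le> B" using assms nu by simp
    have b: "blinfun_apply F (- u) \<le> B" using assms nu by simp
    have "blinfun_apply F x = norm x * blinfun_apply F u"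
      by (subst xu) (simp add: blinfun.scaleR_right)
    moreover have "blinfun_apply F (-u) = - blinfun_apply F u" by (simp add: blinfun.minus_right)
    ultimately have "\<bar>blinfun_apply F x\<bar> \<le> norm x * B"
      using a b by (simp add: abs_mult abs_le_iff mult_left_mono)
    then show ?thesis by (simp add: mult.commute)
  qed
qed

lemma H2:
  fixes F :: "'a::real_normed_vector \<Rightarrow>\<^sub>L real"
  assumes "e > 0"
  shows "\<exists>x. norm x \<le> 1 \<and> blinfun_apply F x > norm F - e"
proof (rule ccontr)
  assume "\<not> ?thesis"
  then have "\<And>x. norm x \<le> 1 \<Longrightarrow> blinfun_apply F x \<le> norm F - e" by force
  then have "norm F \<le> norm F - e" by (rule H1)
  then show False using assms by simp
qed

lemma ws_cont: "continuous_map weak_star_topology euclideanreal (\<lambda>h. blinfun_apply h w)"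
proof -
  have "continuous_map weak_star_topology euclideanreal ((\<lambda>p. p w) \<circ> blinfun_apply)"
    unfolding weak_star_topology_def
    by (rule continuous_map_pullback) (rule continuous_map_product_projection, simp)
  then show ?thesis by (simp add: o_def)
qed

lemma ws_topspace: "topspace weak_star_topology = UNIV"
  unfolding weak_star_topology_def by (simp add: topspace_pullback_topology)

lemma ws_closed_le: "closedin weak_star_topology {h. blinfun_apply h w \<le> s}"
  using closedin_continuous_map_preimage[OF ws_cont[of w], of "{..s}"]
  by (simp add: ws_topspace)

lemma ws_closed_ge: "closedin weak_star_topology {h. blinfun_apply h w \<ge> s}"
  using closedin_continuous_map_preimage[OF ws_cont[of w], of "{s..}"]
  by (simp add: ws_topspace)

lemma convex_le: "convex {h :: 'a::real_normed_vector \<Rightarrow>\<^sub>L real. blinfun_apply h w \<le> s}"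
  unfolding convex_def
proof clarsimp
  fix x y :: "'a \<Rightarrow>\<^sub>L real" and u v :: real
  assume "x w \<le> s" "y w \<le> s" "0 \<le> u" "0 \<le> v" "u + v = 1"
  then have "u * x w + v * y w \<le> u * s + v * s" by (intro add_mono mult_left_mono)
  also have "\<dots> = s" using \<open>u + v = 1\<close> by (simp add: distrib_right[symmetric])
  finally show "blinfun_apply (u *\<^sub>R x + v *\<^sub>R y) w \<le> s"
    by (simp add: blinfun.add_left blinfun.scaleR_left)
qed

definition Qp :: "('a::real_normed_vector \<Rightarrow>\<^sub>L real) \<Rightarrow> bool" where
"Qp g \<longleftrightarrow> (\<forall>\<eta>>0. \<exists>\<alpha>>0. \<forall>x y k. norm x \<le> 1 \<longrightarrow> norm y \<le> 1 \<longrightarrow>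
    blinfun_apply g x \<ge> norm g - \<alpha> \<longrightarrow> blinfun_apply g y \<ge> norm g - \<alpha> \<longrightarrow>
    blinfun_apply k (x - y) \<le> \<eta> * norm k)"

lemma lemA:
  fixes f :: "'a::real_normed_vector \<Rightarrow>\<^sub>L real"
  assumes "norm differentiable (at f)"
  shows "Qp f"
  unfolding Qp_def
proof (intro allI impI)
  fix \<eta> :: real assume "\<eta> > 0"
  from assms obtain D where "(norm has_derivative D) (at f)" by (auto simp: differentiable_def)
  then have bl: "bounded_linear D" and
    Dd: "\<forall>e>0. \<exists>d>0. \<forall>y. norm (y - f) < d \<longrightarrow> norm (norm y - norm f - D (y - f)) \<le> e * norm (y - f)"
    by (auto simp: has_derivative_at_alt)
  obtain r where r: "r > 0" and
    rr: "\<And>y. norm (y - f) < r \<Longrightarrow> norm (norm y - norm f - D (y - f)) \<le> (\<eta>/4) * norm (y - f)"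
    using Dd \<open>\<eta> > 0\<close> by (meson divide_pos_pos zero_less_numeral)
  define t where "t = r / 2"
  have t: "t > 0" "t < r" using r by (auto simp: t_def)
  show "\<exists>\<alpha>>0. \<forall>x y k. norm x \<le> 1 \<longrightarrow> norm y \<le> 1 \<longrightarrow>
    blinfun_apply f x \<ge> norm f - \<alpha> \<longrightarrow> blinfun_apply f y \<ge> norm f - \<alpha> \<longrightarrow>
    blinfun_apply k (x - y) \<le> \<eta> * norm k"
  proof (intro exI[of _ "\<eta> * t / 4"] conjI allI impI)
    show "\<eta> * t / 4 > 0" using t \<open>\<eta> > 0\<close> by simp
    fix x y :: 'a and k :: "'a \<Rightarrow>\<^sub>L real"
    assume x: "norm x \<le> 1" and y: "norm y \<le> 1" and fx: "blinfun_apply f x \<ge> norm f - \<eta> * t / 4"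
      and fy: "blinfun_apply f y \<ge> norm f - \<eta> * t / 4"
    show "blinfun_apply k (x - y) \<le> \<eta> * norm k"
    proof (cases "k = 0")
      case True then show ?thesis by simp
    next
      case False
      then have nk: "norm k > 0" by simp
      define h where "h = (t / norm k) *\<^sub>R k"
      have nh: "norm h = t" using nk t by (simp add: h_def)
      have Dm: "D (- h) = - D h" using bl by (simp add: linear_simps)
      have e1: "norm (norm (f + h) - norm f - D h) \<le> (\<eta>/4) * t"
        using rr[of "f + h"] nh t by simp
      have e2: "norm (norm (f - h) - norm f + D h) \<le> (\<eta>/4) * t"
        using rr[of "f - h"] nh t Dm by simp
      have a1: "blinfun_apply (f + h) x \<le> norm (f + h)" by (rule H0[OF x])
      have a2: "blinfun_apply (f - h) y \<le> norm (f - h)" by (rule H0[OF y])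
      have "blinfun_apply h x - blinfun_apply h y \<le> \<eta> * t"
        using e1 e2 a1 a2 fx fy unfolding real_norm_def abs_le_iff blinfun.add_left blinfun.diff_left
        by linarith
      then have "(t / norm k) * blinfun_apply k (x - y) \<le> \<eta> * t"
        by (simp add: h_def blinfun.scaleR_left blinfun.diff_right diff_divide_distrib right_diff_distrib)
      then have "(norm k / t) * ((t / norm k) * blinfun_apply k (x - y)) \<le> (norm k / t) * (\<eta> * t)"
        using nk t by (intro mult_left_mono) auto
      then show ?thesis using nk t by (simp add: field_simps)
    qed
  qed
qed

lemma lemD:
  fixes g :: "'a::real_normed_vector \<Rightarrow>\<^sub>L real"
  assumes Q: "Qp g"
  shows "norm differentiable (at g)"
proof -
  have "\<forall>n. \<exists>x. norm x \<le> 1 \<and> blinfun_apply g x > norm g - inverse (real (Suc n))"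
    using H2 by (simp add: H2)
  then obtain xs where xs1: "\<And>n. norm (xs n) \<le> 1"
    and xs2: "\<And>n. blinfun_apply g (xs n) > norm g - inverse (real (Suc n))"
    by metis
  have SL: "\<exists>\<alpha>>0. \<exists>M. \<forall>x h n. norm x \<le> 1 \<longrightarrow> blinfun_apply g x \<ge> norm g - \<alpha> \<longrightarrow> n \<ge> M \<longrightarrow>
      \<bar>blinfun_apply h x - blinfun_apply h (xs n)\<bar> \<le> \<eta> * norm h" if "\<eta> > 0" for \<eta> :: real
  proof -
    obtain \<alpha> where a: "\<alpha> > 0" and
      aQ: "\<And>x y k. norm x \<le> 1 \<Longrightarrow> norm y \<le> 1 \<Longrightarrow>
    blinfun_apply g x \<ge> norm g - \<alpha> \<Longrightarrow> blinfun_apply g y \<ge> norm g - \<alpha> \<Longrightarrow>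
    blinfun_apply k (x - y) \<le> \<eta> * norm k"
      using Q \<open>\<eta> > 0\<close> unfolding Qp_def by metis
    obtain M where M: "inverse (real (Suc M)) < \<alpha>" using reals_Archimedean a by blast
    have "norm x \<le> 1 \<longrightarrow> blinfun_apply g x \<ge> norm g - \<alpha> \<longrightarrow> n \<ge> M \<longrightarrow>
      \<bar>blinfun_apply h x - blinfun_apply h (xs n)\<bar> \<le> \<eta> * norm h" for x h n
    proof (intro impI)
      assume x: "norm x \<le> 1" "blinfun_apply g x \<ge> norm g - \<alpha>" "n \<ge> M"
      have "inverse (real (Suc n)) \<le> inverse (real (Suc M))" using x(3) by (simp add: le_imp_inverse_le)
      then have gn: "blinfun_apply g (xs n) \<ge> norm g - \<alpha>" using xs2[of n] M by linarith
      have "blinfun_apply h (x - xs n) \<le> \<eta> * norm h" by (rule aQ[OF x(1) xs1 x(2) gn])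
      moreover have "blinfun_apply h (xs n - x) \<le> \<eta> * norm h" by (rule aQ[OF xs1 x(1) gn x(2)])
      ultimately show "\<bar>blinfun_apply h x - blinfun_apply h (xs n)\<bar> \<le> \<eta> * norm h"
        by (simp add: blinfun.diff_right abs_le_iff)
    qed
    then show ?thesis using a by blast
  qed
  have cv: "convergent (\<lambda>n. blinfun_apply h (xs n))" for h :: "'a \<Rightarrow>\<^sub>L real"
  proof -
    have "Cauchy (\<lambda>n. blinfun_apply h (xs n))"
    proof (rule metric_CauchyI)
      fix e :: real assume "e > 0"
      define \<eta> where "\<eta> = e / (2 * (norm h + 1))"
      have \<eta>: "\<eta> > 0" using \<open>e > 0\<close> unfolding \<eta>_def by (intro divide_pos_pos) (auto simp: add_pos_nonneg, smt (verit) norm_ge_zero)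
      have "\<eta> * norm h < e"
      proof -
        have "\<eta> * norm h \<le> \<eta> * (norm h + 1)" using \<eta> by simp
        also have "\<dots> = e / 2"
        proof -
          have "norm h + 1 > 0" by (smt (verit) norm_ge_zero)
          then show ?thesis unfolding \<eta>_def by (simp add: field_simps)
        qed
        finally show ?thesis using \<open>e > 0\<close> by simp
      qed
      obtain \<alpha> M where a: "\<alpha> > 0" and aM: "\<And>x h n. norm x \<le> 1 \<Longrightarrow> blinfun_apply g x \<ge> norm g - \<alpha> \<Longrightarrow> n \<ge> M \<Longrightarrow>
      \<bar>blinfun_apply h x - blinfun_apply h (xs n)\<bar> \<le> \<eta> * norm (h :: 'a \<Rightarrow>\<^sub>L real)"
        using SL[OF \<eta>] by metis
      obtain M' where M': "inverse (real (Suc M')) < \<alpha>" using reals_Archimedean a by blast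
      show "\<exists>M. \<forall>m\<ge>M. \<forall>n\<ge>M. dist (blinfun_apply h (xs m)) (blinfun_apply h (xs n)) < e"
      proof (intro exI[of _ "max M M'"] allI impI)
        fix m n assume mn: "max M M' \<le> m" "max M M' \<le> n"
        have "inverse (real (Suc m)) \<le> inverse (real (Suc M'))" using mn by (simp add: le_imp_inverse_le)
        then have gm: "blinfun_apply g (xs m) \<ge> norm g - \<alpha>" using xs2[of m] M' by linarith
        have "\<bar>blinfun_apply h (xs m) - blinfun_apply h (xs n)\<bar> \<le> \<eta> * norm h"
          using aM[OF xs1 gm, of n h] mn by simp
        then show "dist (blinfun_apply h (xs m)) (blinfun_apply h (xs n)) < e"
          using \<open>\<eta> * norm h < e\<close> by (simp add: dist_real_def)
      qed
    qed
    then show ?thesis by (simp add: Cauchy_convergent_iff)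
  qed
  define D where "D h = lim (\<lambda>n. blinfun_apply h (xs n))" for h :: "'a \<Rightarrow>\<^sub>L real"
  have Dl: "(\<lambda>n. blinfun_apply h (xs n)) \<longlonglongrightarrow> D h" for h
    using cv[of h] by (simp add: D_def convergent_LIMSEQ_iff)
  have Dadd: "D (a + b) = D a + D b" for a b
  proof -
    have "(\<lambda>n. blinfun_apply (a + b) (xs n)) \<longlonglongrightarrow> D a + D b"
      using tendsto_add[OF Dl[of a] Dl[of b]] by (simp add: blinfun.add_left)
    then show ?thesis using Dl[of "a+b"] LIMSEQ_unique by blast
  qed
  have Dsc: "D (c *\<^sub>R a) = c *\<^sub>R D a" for a c
  proof -
    have "(\<lambda>n. blinfun_apply (c *\<^sub>R a) (xs n)) \<longlonglongrightarrow> c * D a"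
      using tendsto_mult[OF tendsto_const[of c] Dl[of a]] by (simp add: blinfun.scaleR_left)
    then show ?thesis using Dl[of "c *\<^sub>R a"] LIMSEQ_unique by fastforce
  qed
  have Dup: "D h \<le> norm h" for h
    using Dl[of h] by (rule LIMSEQ_le_const2) (use H0[OF xs1] in blast)
  have Dlo: "- norm h \<le> D h" for h
  proof -
    have "D (-h) \<le> norm h" using Dup[of "-h"] by simp
    moreover have "D (-h) = - D h" using Dsc[of "-1" h] by simp
    ultimately show ?thesis by simp
  qed
  have bl: "bounded_linear D"
  proof (rule bounded_linear_intro[where K=1])
    show "D (x + y) = D x + D y" for x y by (rule Dadd)
    show "D (r *\<^sub>R x) = r *\<^sub>R D x" for r x by (rule Dsc)
    show "norm (D x) \<le> norm x * 1" for x using Dup[of x] Dlo[of x] by simp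
  qed
  have SD: "\<exists>\<alpha>>0. \<forall>x h. norm x \<le> 1 \<longrightarrow> blinfun_apply g x \<ge> norm g - \<alpha> \<longrightarrow>
      \<bar>blinfun_apply h x - D h\<bar> \<le> \<eta> * norm (h :: 'a \<Rightarrow>\<^sub>L real)" if \<eta>pos: "\<eta> > 0" for \<eta> :: real
  proof -
    obtain \<alpha> M where a: "\<alpha> > 0" and aM: "\<And>x h n. norm x \<le> 1 \<Longrightarrow> blinfun_apply g x \<ge> norm g - \<alpha> \<Longrightarrow> n \<ge> M \<Longrightarrow>
      \<bar>blinfun_apply h x - blinfun_apply h (xs n)\<bar> \<le> \<eta> * norm (h :: 'a \<Rightarrow>\<^sub>L real)"
      using SL[OF \<eta>pos] by metis
    have "\<bar>blinfun_apply h x - D h\<bar> \<le> \<eta> * norm h"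
      if x: "norm x \<le> 1" "blinfun_apply g x \<ge> norm g - \<alpha>" for x h
    proof -
      have l: "(\<lambda>n. \<bar>blinfun_apply h x - blinfun_apply h (xs n)\<bar>) \<longlonglongrightarrow> \<bar>blinfun_apply h x - D h\<bar>"
        by (intro tendsto_intros Dl)
      show ?thesis by (rule LIMSEQ_le_const2[OF l]) (use aM[OF x] in blast)
    qed
    then show ?thesis using a by blast
  qed
  have "(norm has_derivative D) (at g)"
    unfolding has_derivative_at_alt
  proof (intro conjI bl allI impI)
    fix e :: real assume "e > 0"
    obtain \<alpha> where a: "\<alpha> > 0" and aS: "\<And>x h. norm x \<le> 1 \<Longrightarrow> blinfun_apply g x \<ge> norm g - \<alpha> \<Longrightarrow>
      \<bar>blinfun_apply h x - D h\<bar> \<le> e * norm (h :: 'a \<Rightarrow>\<^sub>L real)"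
      using SD[OF \<open>e > 0\<close>] by metis
    show "\<exists>d>0. \<forall>y. norm (y - g) < d \<longrightarrow> norm (norm y - norm g - D (y - g)) \<le> e * norm (y - g)"
    proof (intro exI[of _ "\<alpha>/2"] conjI allI impI)
      show "\<alpha>/2 > 0" using a by simp
      fix y assume yd: "norm (y - g) < \<alpha>/2"
      define h where "h = y - g"
      have yh: "y = g + h" by (simp add: h_def)
      have lo: "norm g + D h \<le> norm y"
      proof -
        have l: "(\<lambda>n. norm g - inverse (real (Suc n)) + blinfun_apply h (xs n)) \<longlonglongrightarrow> norm g - 0 + D h"
          by (intro tendsto_intros LIMSEQ_inverse_real_of_nat Dl)
        have "norm g - inverse (real (Suc n)) + blinfun_apply h (xs n) \<le> norm y" for n
        proof -
          have "blinfun_apply y (xs n) \<le> norm y" by (rule H0[OF xs1])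
          then show ?thesis using xs2[of n] by (simp add: yh blinfun.add_left)
        qed
        then show ?thesis using LIMSEQ_le_const2[OF l] by simp
      qed
      have up: "norm y \<le> norm g + D h + e * norm h"
      proof (rule H1)
        fix x :: 'a assume x: "norm x \<le> 1"
        have gx: "blinfun_apply g x \<le> norm g" by (rule H0[OF x])
        have hx: "blinfun_apply h x \<le> norm h" by (rule H0[OF x])
        have en: "0 \<le> e * norm h" using \<open>e > 0\<close> by simp
        show "blinfun_apply y x \<le> norm g + D h + e * norm h"
        proof (cases "blinfun_apply g x \<ge> norm g - \<alpha>")
          case True
          then have "\<bar>blinfun_apply h x - D h\<bar> \<le> e * norm h" using aS[OF x] by blast
          then show ?thesis using gx by (simp add: yh blinfun.add_left abs_le_iff)
        next
          case False
          have "norm h < \<alpha>/2" using yd by (simp add: h_def)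
          then show ?thesis using False hx Dlo[of h] en by (simp add: yh blinfun.add_left)
        qed
      qed
      show "norm (norm y - norm g - D (y - g)) \<le> e * norm (y - g)"
        using lo up by (simp add: h_def[symmetric] abs_le_iff)
    qed
  qed
  then show ?thesis by (auto simp: differentiable_def)
qed

lemma geo_sum: "(\<Sum>k\<le>m. (1/2::real)^(k+2)) = 1/2 - (1/2)^(m+2)"
  by (induction m) (auto simp: field_simps)

lemma lemS:
  fixes \<Lambda> :: "('a::real_normed_vector \<Rightarrow>\<^sub>L real) set" and g :: "'a \<Rightarrow>\<^sub>L real"
  assumes L1: "\<Lambda> \<subseteq> cball 0 1"
    and L2: "compactin weak_star_topology \<Lambda>"
    and L3: "weak_star_closed_convex_hull \<Lambda> = cball 0 1"
    and L4: "\<forall>f \<in> \<Lambda> \<inter> sphere 0 1. norm differentiable (at f)"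
    and g1: "norm g = 1"
  shows "Qp g"
proof (rule ccontr)
  assume "\<not> Qp g"
  then obtain \<eta> where \<eta>: "\<eta> > 0" and bad: "\<forall>\<alpha>>0. \<exists>x y k. norm x \<le> 1 \<and> norm y \<le> 1 \<and>
    blinfun_apply g x \<ge> 1 - \<alpha> \<and> blinfun_apply g y \<ge> 1 - \<alpha> \<and>
    blinfun_apply k (x - y) > \<eta> * norm (k :: 'a \<Rightarrow>\<^sub>L real)"
    unfolding Qp_def g1 by (auto simp: not_le)
  define c :: "nat \<Rightarrow> real" where "c n = (1/2)^n" for n
  define \<delta> :: "nat \<Rightarrow> real" where "\<delta> n = (1/2)^n * (1/2)^(n+2)" for n
  have cpos: "c n > 0" for n by (simp add: c_def)
  have "\<forall>n. \<exists>x y k. norm x \<le> 1 \<and> norm y \<le> 1 \<and>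
    blinfun_apply g x \<ge> 1 - \<delta> n \<and> blinfun_apply g y \<ge> 1 - \<delta> n \<and>
    blinfun_apply k (x - y) > \<eta> * norm (k :: 'a \<Rightarrow>\<^sub>L real)"
    using bad by (simp add: \<delta>_def)
  then obtain xs ys ks where xn: "\<And>n. norm (xs n) \<le> 1" and yn: "\<And>n. norm (ys n) \<le> 1"
    and gx: "\<And>n. blinfun_apply g (xs n) \<ge> 1 - \<delta> n" and gy: "\<And>n. blinfun_apply g (ys n) \<ge> 1 - \<delta> n"
    and kb: "\<And>n. blinfun_apply (ks n) (xs n - ys n) > \<eta> * norm (ks n)"
    by metis
  define z where "z n = (1/2) *\<^sub>R (xs n + ys n)" for n
  have fz: "blinfun_apply f (z n) = (blinfun_apply f (xs n) + blinfun_apply f (ys n)) / 2" for f :: "'a \<Rightarrow>\<^sub>L real" and n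
    by (simp add: z_def blinfun.scaleR_right blinfun.add_right)
  have zn: "norm (z n) \<le> 1" for n
  proof -
    have "norm (xs n + ys n) \<le> 2" using xn[of n] yn[of n] norm_triangle_ineq[of "xs n" "ys n"] by linarith
    then show ?thesis by (simp add: z_def)
  qed
  have gz: "1 - blinfun_apply g (z n) \<le> \<delta> n" for n using gx[of n] gy[of n] fz[of g n] by (simp add: field_simps)
  have fle: "blinfun_apply f x \<le> 1" if "f \<in> \<Lambda>" "norm x \<le> 1" for f x
    using H0[OF that(2), of f] L1 that(1) by force
  have fin: "\<exists>f\<in>\<Lambda>. \<forall>k\<le>m. blinfun_apply f (z k) \<ge> 1 - c k" for m
  proof (rule ccontr)
    assume nf: "\<not> ?thesis"
    define w where "w = (\<Sum>k\<le>m. (1 / c k) *\<^sub>R z k)"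
    define S where "S = (\<Sum>k\<le>m. 1 / c k)"
    have Sw: "S - blinfun_apply h w = (\<Sum>k\<le>m. (1 - blinfun_apply h (z k)) / c k)" for h
      by (simp add: S_def w_def blinfun.sum_right blinfun.scaleR_right sum_subtractf[symmetric]
          diff_divide_distrib)
    define C where "C = {h :: 'a \<Rightarrow>\<^sub>L real. blinfun_apply h w \<le> S - 1}"
    have "\<Lambda> \<subseteq> C"
    proof
      fix f assume f: "f \<in> \<Lambda>"
      then obtain k0 where k0: "k0 \<le> m" "blinfun_apply f (z k0) < 1 - c k0" using nf by (auto simp: not_le)
      have "1 < (1 - blinfun_apply f (z k0)) / c k0" using k0 cpos[of k0] by (simp add: field_simps)
      also have "\<dots> \<le> (\<Sum>k\<le>m. (1 - blinfun_apply f (z k)) / c k)"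
        by (rule member_le_sum) (use k0 fle[OF f zn] cpos in \<open>auto intro!: divide_nonneg_pos\<close>)
      finally show "f \<in> C" using Sw[of f] by (simp add: C_def)
    qed
    moreover have "convex C" "closedin weak_star_topology C"
      unfolding C_def by (rule convex_le, rule ws_closed_le)
    ultimately have "weak_star_closed_convex_hull \<Lambda> \<subseteq> C"
      unfolding weak_star_closed_convex_hull_def by blast
    then have "g \<in> C" using L3 g1 by auto
    then have "1 \<le> (\<Sum>k\<le>m. (1 - blinfun_apply g (z k)) / c k)" using Sw[of g] by (simp add: C_def)
    also have "\<dots> \<le> (\<Sum>k\<le>m. (1/2::real)^(k+2))"
    proof (rule sum_mono)
      fix k assume "k \<in> {..m}"
      have "(1 - blinfun_apply g (z k)) / c k \<le> \<delta> k / c k"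
        using gz[of k] cpos[of k] by (simp add: divide_right_mono)
      also have "\<dots> = (1/2)^(k+2)" by (simp add: \<delta>_def c_def)
      finally show "(1 - blinfun_apply g (z k)) / c k \<le> (1/2)^(k+2)" .
    qed
    also have "\<dots> < 1" using geo_sum[of m] zero_le_power[of "1/2::real" "m+2"] by linarith
    finally show False by simp
  qed
  define A where "A k = {h :: 'a \<Rightarrow>\<^sub>L real. blinfun_apply h (z k) \<ge> 1 - c k}" for k
  have "\<Lambda> \<inter> \<Inter>(range A) \<noteq> {}"
  proof -
    have "\<forall>C\<in>range A. closedin weak_star_topology C" by (auto simp: A_def ws_closed_ge)
    moreover have "\<Lambda> \<inter> \<Inter>F \<noteq> {}" if FF: "finite F" "F \<subseteq> range A" for F
    proof -
      obtain K where K: "finite K" "F = A ` K" using finite_subset_image[OF FF] by blast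
      obtain m where m: "K \<subseteq> {..<m}" using finite_nat_bounded[OF K(1)] by blast
      obtain f where f: "f \<in> \<Lambda>" "\<forall>k\<le>m. blinfun_apply f (z k) \<ge> 1 - c k" using fin[of m] by blast
      have "f \<in> \<Inter>F" using f(2) m K(2) by (auto simp: A_def)
      then show ?thesis using f(1) by blast
    qed
    ultimately show ?thesis using L2 unfolding compactin_fip by blast
  qed
  then obtain f where f: "f \<in> \<Lambda>" and fzk: "\<And>k. blinfun_apply f (z k) \<ge> 1 - c k"
    by (auto simp: A_def)
  have nf1: "norm f \<le> 1" using f L1 by auto
  have nf: "norm f = 1"
  proof (rule ccontr)
    assume "norm f \<noteq> 1"
    then have "1 - norm f > 0" using nf1 by simp
    then obtain k where k: "(1/2::real)^k < 1 - norm f" using real_arch_pow_inv[of "1 - norm f" "1/2"] by auto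
    have "blinfun_apply f (z k) \<le> norm f" by (rule H0[OF zn])
    then show False using fzk[of k] k by (simp add: c_def)
  qed
  have "norm differentiable (at f)" using L4 f nf by auto
  then have "Qp f" by (rule lemA)
  then obtain \<alpha> where a: "\<alpha> > 0" and aQ: "\<And>x y k. norm x \<le> 1 \<Longrightarrow> norm y \<le> 1 \<Longrightarrow>
    blinfun_apply f x \<ge> norm f - \<alpha> \<Longrightarrow> blinfun_apply f y \<ge> norm f - \<alpha> \<Longrightarrow>
    blinfun_apply k (x - y) \<le> \<eta> * norm (k :: 'a \<Rightarrow>\<^sub>L real)"
    using \<eta> unfolding Qp_def by metis
  obtain n where n: "(1/2::real)^n < \<alpha> / 2" using real_arch_pow_inv[of "\<alpha>/2" "1/2"] a by auto
  have fx1: "blinfun_apply f (xs n) \<le> 1" using fle[OF f xn] .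
  have fy1: "blinfun_apply f (ys n) \<le> 1" using fle[OF f yn] .
  have "blinfun_apply f (xs n) \<ge> norm f - \<alpha>" using fzk[of n] fz[of f n] fy1 n nf by (simp add: c_def)
  moreover have "blinfun_apply f (ys n) \<ge> norm f - \<alpha>" using fzk[of n] fz[of f n] fx1 n nf by (simp add: c_def)
  ultimately have "blinfun_apply (ks n) (xs n - ys n) \<le> \<eta> * norm (ks n)" using aQ[OF xn yn] by blast
  then show False using kb[of n] by simp
qed

lemma Qp_scale:
  fixes g :: "'a::real_normed_vector \<Rightarrow>\<^sub>L real"
  assumes c: "c > 0" and Q: "Qp g"
  shows "Qp (c *\<^sub>R g)"
  unfolding Qp_def
proof (intro allI impI)
  fix \<eta> :: real assume "\<eta> > 0"
  then obtain \<alpha> where a: "\<alpha> > 0" and aQ: "\<And>x y k. norm x \<le> 1 \<Longrightarrow> norm y \<le> 1 \<Longrightarrow>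
    blinfun_apply g x \<ge> norm g - \<alpha> \<Longrightarrow> blinfun_apply g y \<ge> norm g - \<alpha> \<Longrightarrow>
    blinfun_apply k (x - y) \<le> \<eta> * norm (k :: 'a \<Rightarrow>\<^sub>L real)"
    using Q unfolding Qp_def by metis
  have eq: "blinfun_apply (c *\<^sub>R g) x \<ge> norm (c *\<^sub>R g) - c * \<alpha> \<longleftrightarrow> blinfun_apply g x \<ge> norm g - \<alpha>" for x
  proof -
    have "blinfun_apply (c *\<^sub>R g) x = c * blinfun_apply g x" by (simp add: blinfun.scaleR_left)
    moreover have "norm (c *\<^sub>R g) - c * \<alpha> = c * (norm g - \<alpha>)" using c by (simp add: right_diff_distrib)
    ultimately show ?thesis using c by simp
  qed
  show "\<exists>\<alpha>>0. \<forall>x y k. norm x \<le> 1 \<longrightarrow> norm y \<le> 1 \<longrightarrow>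
    blinfun_apply (c *\<^sub>R g) x \<ge> norm (c *\<^sub>R g) - \<alpha> \<longrightarrow> blinfun_apply (c *\<^sub>R g) y \<ge> norm (c *\<^sub>R g) - \<alpha> \<longrightarrow>
    blinfun_apply k (x - y) \<le> \<eta> * norm k"
    using a c aQ eq by (intro exI[of _ "c * \<alpha>"]) auto
qed

theorem lemma3p1:
  fixes \<Lambda> :: "('a::banach \<Rightarrow>\<^sub>L real) set"
  assumes "\<Lambda> \<subseteq> cball 0 1"
    and "compactin weak_star_topology \<Lambda>"
    and "weak_star_closed_convex_hull \<Lambda> = cball 0 1"
    and "\<forall>f \<in> \<Lambda> \<inter> sphere 0 1. norm differentiable (at f)"
  shows "\<forall>f::'a \<Rightarrow>\<^sub>L real. f \<noteq> 0 \<longrightarrow> norm differentiable (at f)"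
proof (intro allI impI)
  fix f :: "'a \<Rightarrow>\<^sub>L real" assume "f \<noteq> 0"
  define g where "g = (1 / norm f) *\<^sub>R f"
  have "norm g = 1" using \<open>f \<noteq> 0\<close> by (simp add: g_def)
  then have "Qp g" by (rule lemS[OF assms])
  then have "Qp (norm f *\<^sub>R g)" using \<open>f \<noteq> 0\<close> by (intro Qp_scale) auto
  moreover have "norm f *\<^sub>R g = f" using \<open>f \<noteq> 0\<close> by (simp add: g_def)
  ultimately show "norm differentiable (at f)" using lemD by metis
qed

end
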